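(* Let $\lambda$ be a partition of $n$, let $l_1(\lambda)$ be the multiplicity of the part $1$ in $\lambda$, and let $\mathrm{fch}(\lambda)=\{h(1,1),h(2,1),\dots,h(l(\lambda),1)\}$ be the set of first-column hook lengths of $\lambda$, where $l(\lambda)$ is the number of parts. Let $f_\lambda$ be the degree of the irreducible character of $\mathsf{S}_n$ labelled by $\lambda$. If $q$ is a prime with $n-l_1(\lambda)\le q\le n$ and $q\nmid f_\lambda$, then $q,2q,\dots,\lfloor n/q\rfloor q\in\mathrm{fch}(\lambda)$.
   Context: $h(i,j)$ denotes the hook length at node $(i,j)$ of the Young diagram of $\lambda$ (number of nodes to the right of and below $(i,j)$, including $(i,j)$). $f_\lambda=n!/\prod_{(i,j)}h(i,j)$. *)

theory Defs
  imports Main "HOL-Computational_Algebra.Primes"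
begin

text \<open>A partition of n: a weakly decreasing list of positive parts summing to n.
  Rows and columns are indexed from 1: part i is lam ! (i - 1).\<close>

definition is_partition :: "nat list \<Rightarrow> nat \<Rightarrow> bool" where
  "is_partition lam n \<longleftrightarrow> sorted (rev lam) \<and> (\<forall>x\<in>set lam. 0 < x) \<and> sum_list lam = n"

definition part :: "nat list \<Rightarrow> nat \<Rightarrow> nat" where
  "part lam i = (if 1 \<le> i \<and> i \<le> length lam then lam ! (i - 1) else 0)"

definition num_parts :: "nat list \<Rightarrow> nat" where
  "num_parts lam = length lam"

definition conj_part :: "nat list \<Rightarrow> nat \<Rightarrow> nat" where
  "conj_part lam j = card {i. 1 \<le> i \<and> i \<le> length lam \<and> j \<le> part lam i}"

definition young_diagram :: "nat list \<Rightarrow> (nat \<times> nat) set" where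
  "young_diagram lam = {(i, j). 1 \<le> i \<and> i \<le> length lam \<and> 1 \<le> j \<and> j \<le> part lam i}"

definition hook :: "nat list \<Rightarrow> nat \<Rightarrow> nat \<Rightarrow> nat" where
  "hook lam i j = (part lam i - j) + (conj_part lam j - i) + 1"

text \<open>Hook length formula f_lambda = n! / prod of hook lengths.\<close>
definition f_lam :: "nat list \<Rightarrow> nat" where
  "f_lam lam = fact (sum_list lam) div (\<Prod>(i, j)\<in>young_diagram lam. hook lam i j)"

definition mult_one :: "nat list \<Rightarrow> nat" where
  "mult_one lam = count_list lam 1"

definition fch :: "nat list \<Rightarrow> nat set" where
  "fch lam = {hook lam i 1 | i. 1 \<le> i \<and> i \<le> num_parts lam}"

end

theory Submission
  imports Defs
begin

lemma card_multiples: "0 < (d::nat) \<Longrightarrow> card {t\<in>{1..m}. d dvd t} = m div d"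
proof -
  assume d: "0 < d"
  have "{t\<in>{1..m}. d dvd t} = (\<lambda>k. d * k) ` {1..m div d}"
  proof (rule set_eqI, rule iffI)
    fix t assume "t \<in> {t\<in>{1..m}. d dvd t}"
    then obtain k where k: "t = d * k" "1 \<le> t" "t \<le> m" by auto
    then have "1 \<le> k" by (cases k) auto
    moreover have "k \<le> m div d"
    proof -
      have "(d * k) div d \<le> m div d" using k(1,3) by (intro div_le_mono) simp
      then show ?thesis using d by simp
    qed
    ultimately show "t \<in> (\<lambda>k. d * k) ` {1..m div d}" using k by auto
  next
    fix t assume "t \<in> (\<lambda>k. d * k) ` {1..m div d}"
    then obtain k where k0: "k \<in> {1..m div d}" "t = d * k" by (rule imageE)
    then have k: "t = d * k" "1 \<le> k" "k \<le> m div d" by auto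
    have "d * k \<le> d * (m div d)" using k(3) by simp
    also have "\<dots> \<le> m" by (rule times_div_less_eq_dividend)
    finally have "d * k \<le> m" .
    moreover have "1 \<le> d * k" using k d by simp
    ultimately show "t \<in> {t\<in>{1..m}. d dvd t}" using k by auto
  qed
  moreover have "inj_on (\<lambda>k. d * k) {1..m div d}" using d by (auto intro: inj_onI)
  ultimately show ?thesis by (simp add: card_image)
qed

lemma distinct_sum: "finite (B::nat set) \<Longrightarrow> (\<Sum>k<card B. k) \<le> \<Sum>B"
proof (induction "card B" arbitrary: B)
  case 0
  then show ?case by simp
next
  case (Suc m)
  then have ne: "B \<noteq> {}" by auto
  define M where "M = Max B"
  have MB: "M \<in> B" using Max_in[OF Suc.prems ne] M_def by simp
  have "B \<subseteq> {0..M}" using Max_ge[OF Suc.prems] M_def by auto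
  then have "card B \<le> Suc M" using card_mono[of "{0..M}" B] by simp
  have cB': "card (B - {M}) = m" using Suc.hyps(2) MB Suc.prems by simp
  have IH: "(\<Sum>k<m. k) \<le> \<Sum>(B - {M})" using Suc.hyps(1)[of "B - {M}"] cB' Suc.prems by simp
  have "\<Sum>B = M + \<Sum>(B - {M})" using Suc.prems MB by (simp add: sum.remove)
  moreover have "(\<Sum>k<card B. k) = m + (\<Sum>k<m. k)" using Suc.hyps(2)[symmetric] by simp
  ultimately show ?case using IH \<open>card B \<le> Suc M\<close> Suc.hyps(2) by simp
qed

lemma mult_as_card:
  assumes "prime (p::nat)" "0 < h" "h \<le> N"
  shows "multiplicity p h = card {e\<in>{1..N}. p ^ e dvd h}"
proof -
  let ?m = "multiplicity p h"
  have "p ^ ?m dvd h" by (rule multiplicity_dvd)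
  then have "p ^ ?m \<le> h" using assms(2) by (rule dvd_imp_le)
  moreover have "?m < p ^ ?m"
  proof -
    have "?m < 2 ^ ?m" by (rule less_exp)
    also have "\<dots> \<le> p ^ ?m" using prime_ge_2_nat[OF assms(1)] by (rule power_mono) simp
    finally show ?thesis .
  qed
  ultimately have mN: "?m \<le> N" using assms(3) by linarith
  have pu: "\<not> is_unit p" using prime_ge_2_nat[OF assms(1)] by simp
  have iff: "p ^ e dvd h \<longleftrightarrow> e \<le> ?m" for e
    using power_dvd_iff_le_multiplicity[of h p e] pu assms(2) by simp
  have "{e\<in>{1..N}. p ^ e dvd h} = {1..?m}"
  proof (rule set_eqI)
    fix e show "e \<in> {e\<in>{1..N}. p ^ e dvd h} \<longleftrightarrow> e \<in> {1..?m}"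
      unfolding iff using mN by auto
  qed
  then show ?thesis by simp
qed

lemma card_filter_sum: "finite A \<Longrightarrow> card {x\<in>A. P x} = (\<Sum>x\<in>A. if P x then 1 else 0)"
  by (simp add: sum.inter_filter[symmetric])

lemma mult_prod_card:
  assumes "prime (p::nat)" "finite A" "\<And>x. x \<in> A \<Longrightarrow> 0 < f x \<and> f x \<le> N"
  shows "multiplicity p (\<Prod>x\<in>A. f x) = (\<Sum>e\<in>{1..N}. card {x\<in>A. p ^ e dvd f x})"
proof -
  have "multiplicity p (\<Prod>x\<in>A. f x) = (\<Sum>x\<in>A. multiplicity p (f x))"
    using assms by (intro prime_elem_multiplicity_prod_distrib) (auto simp: image_iff)
  also have "\<dots> = (\<Sum>x\<in>A. card {e\<in>{1..N}. p ^ e dvd f x})"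
    using assms by (intro sum.cong refl mult_as_card) auto
  also have "\<dots> = (\<Sum>x\<in>A. \<Sum>e\<in>{1..N}. if p ^ e dvd f x then 1 else 0)"
    by (intro sum.cong refl card_filter_sum) simp
  also have "\<dots> = (\<Sum>e\<in>{1..N}. \<Sum>x\<in>A. if p ^ e dvd f x then 1 else 0)"
    by (rule sum.swap)
  also have "\<dots> = (\<Sum>e\<in>{1..N}. card {x\<in>A. p ^ e dvd f x})"
    using assms(2) by (intro sum.cong refl card_filter_sum[symmetric])
  finally show ?thesis .
qed

lemma count_list_less: "y \<in> set xs \<Longrightarrow> y \<noteq> x \<Longrightarrow> count_list xs x < length xs"
proof (induction xs)
  case Nil
  then show ?case by simp
next
  case (Cons a xs)
  have "count_list xs x \<le> length xs" by (induction xs) auto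
  then show ?case using Cons by auto
qed

context
  fixes lam :: "nat list" and n :: nat
  assumes P: "is_partition lam n"
begin

lemma part_pos: "1 \<le> i \<Longrightarrow> i \<le> length lam \<Longrightarrow> 1 \<le> part lam i"
proof -
  assume a: "1 \<le> i" "i \<le> length lam"
  then have "lam ! (i - 1) \<in> set lam" by (intro nth_mem) simp
  then have "0 < lam ! (i - 1)" using P unfolding is_partition_def by blast
  then show ?thesis using a unfolding part_def by simp
qed

lemma part_mono: "1 \<le> i \<Longrightarrow> i \<le> i' \<Longrightarrow> part lam i' \<le> part lam i"
proof (cases "i' \<le> length lam")
  case True
  assume "1 \<le> i" "i \<le> i'"
  then show ?thesis using True P unfolding is_partition_def part_def
    by (auto intro!: sorted_rev_nth_mono)
next
  case False
  then show ?thesis by (simp add: part_def)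
qed

lemma conj_iff:
  assumes "1 \<le> i" "1 \<le> j"
  shows "(i \<le> length lam \<and> j \<le> part lam i) \<longleftrightarrow> i \<le> conj_part lam j"
proof -
  define S where "S = {i. 1 \<le> i \<and> i \<le> length lam \<and> j \<le> part lam i}"
  have fin: "finite S" unfolding S_def by (rule finite_subset[of _ "{1..length lam}"]) auto
  have down: "i' \<in> S" if "i \<in> S" "1 \<le> i'" "i' \<le> i" for i i'
    using that part_mono[of i' i] unfolding S_def by auto
  have c: "conj_part lam j = card S" unfolding S_def conj_part_def by simp
  show ?thesis
  proof
    assume h: "i \<le> length lam \<and> j \<le> part lam i"
    then have "i \<in> S" using assms unfolding S_def by auto
    then have "{1..i} \<subseteq> S" using down by auto
    then have "card {1..i} \<le> card S" using fin by (rule card_mono[rotated])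
    then show "i \<le> conj_part lam j" using c by simp
  next
    assume h: "i \<le> conj_part lam j"
    show "i \<le> length lam \<and> j \<le> part lam i"
    proof (rule ccontr)
      assume "\<not> ?thesis"
      then have "i \<notin> S" unfolding S_def using assms by auto
      then have "S \<subseteq> {1..i - 1}"
        using down assms unfolding S_def by (force simp: not_le)
      then have "card S \<le> i - 1" using card_mono[of "{1..i-1}" S] by simp
      then show False using h c assms by simp
    qed
  qed
qed

lemma conj_le: "conj_part lam j \<le> length lam"
proof -
  have "{i. 1 \<le> i \<and> i \<le> length lam \<and> j \<le> part lam i} \<subseteq> {1..length lam}" by auto
  then show ?thesis unfolding conj_part_def using card_mono[of "{1..length lam}"] by fastforce
qed

lemma conj_one: "conj_part lam 1 = length lam"
proof -
  have "{i. 1 \<le> i \<and> i \<le> length lam \<and> 1 \<le> part lam i} = {1..length lam}"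
    using part_pos by auto
  then show ?thesis unfolding conj_part_def by simp
qed

definition ell :: "nat \<Rightarrow> nat" where
  "ell i = part lam i + length lam - i"

lemma ell_strict: "1 \<le> i \<Longrightarrow> i < k \<Longrightarrow> k \<le> length lam \<Longrightarrow> ell k < ell i"
  using part_mono[of i k] unfolding ell_def by simp

lemma ell_pos: "1 \<le> k \<Longrightarrow> k \<le> length lam \<Longrightarrow> 1 \<le> ell k"
  using part_pos[of k] unfolding ell_def by simp

lemma hook_strict:
  assumes "1 \<le> i" "i \<le> length lam" "1 \<le> j" "j < j'" "j' \<le> part lam i"
  shows "hook lam i j' < hook lam i j"
proof -
  have "i \<le> conj_part lam j'" using conj_iff[of i j'] assms by simp
  moreover have "conj_part lam j' \<le> conj_part lam j"
  proof -
    have "i' \<le> conj_part lam j" if "1 \<le> i'" "i' \<le> conj_part lam j'" for i'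
      using conj_iff[of i' j'] conj_iff[of i' j] that assms by auto
    then show ?thesis using conj_le assms
      by (metis \<open>i \<le> conj_part lam j'\<close> assms(1) order.trans le_refl)
  qed
  ultimately show ?thesis using assms unfolding hook_def by simp
qed

lemma hook_le_ell:
  assumes "1 \<le> i" "i \<le> length lam" "1 \<le> j" "j \<le> part lam i"
  shows "1 \<le> hook lam i j \<and> hook lam i j \<le> ell i"
proof -
  have "conj_part lam j \<le> length lam" by (rule conj_le)
  then show ?thesis using assms unfolding hook_def ell_def by simp
qed

lemma hook_ne_diff:
  assumes "1 \<le> i" "i < k" "k \<le> length lam" "1 \<le> j" "j \<le> part lam i"
  shows "hook lam i j \<noteq> ell i - ell k"
proof
  assume h: "hook lam i j = ell i - ell k"
  have ic: "i \<le> conj_part lam j" using conj_iff[of i j] assms by simp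
  have lk: "ell k < ell i" using ell_strict assms by simp
  have pk: "part lam k \<le> part lam i" using part_mono[of i k] assms by simp
  have eq: "conj_part lam j + part lam k + 1 = j + k"
    using h ic lk pk assms conj_le[of j] unfolding hook_def ell_def by simp
  show False
  proof (cases "j \<le> part lam k")
    case True
    then have "k \<le> conj_part lam j" using conj_iff[of k j] assms by simp
    then show False using eq True by simp
  next
    case False
    then have "\<not> k \<le> conj_part lam j" using conj_iff[of k j] assms by simp
    then show False using eq False by simp
  qed
qed

lemma row_partition:
  assumes "1 \<le> i" "i \<le> length lam"
  shows "(\<lambda>j. hook lam i j) ` {1..part lam i} \<union> (\<lambda>k. ell i - ell k) ` {i+1..length lam} = {1..ell i}"
    and "(\<lambda>j. hook lam i j) ` {1..part lam i} \<inter> (\<lambda>k. ell i - ell k) ` {i+1..length lam} = {}"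
    and "inj_on (\<lambda>j. hook lam i j) {1..part lam i}"
    and "inj_on (\<lambda>k. ell i - ell k) {i+1..length lam}"
proof -
  show inj1: "inj_on (\<lambda>j. hook lam i j) {1..part lam i}"
  proof (rule inj_onI)
    fix a b assume "a \<in> {1..part lam i}" "b \<in> {1..part lam i}" "hook lam i a = hook lam i b"
    then show "a = b" using hook_strict[of i a b] hook_strict[of i b a] assms
      by (metis atLeastAtMost_iff less_irrefl nat_neq_iff)
  qed
  show inj2: "inj_on (\<lambda>k. ell i - ell k) {i+1..length lam}"
  proof (rule inj_onI)
    fix a b assume a: "a \<in> {i+1..length lam}" "b \<in> {i+1..length lam}" "ell i - ell a = ell i - ell b"
    have "ell a < ell i" "ell b < ell i" using a ell_strict assms by auto
    then have "ell a = ell b" using a by simp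
    then show "a = b" using ell_strict[of a b] ell_strict[of b a] a assms
      by (metis atLeastAtMost_iff less_irrefl nat_neq_iff le_trans le_add2)
  qed
  show dis: "(\<lambda>j. hook lam i j) ` {1..part lam i} \<inter> (\<lambda>k. ell i - ell k) ` {i+1..length lam} = {}"
    using hook_ne_diff assms by force
  have sub: "(\<lambda>j. hook lam i j) ` {1..part lam i} \<union> (\<lambda>k. ell i - ell k) ` {i+1..length lam} \<subseteq> {1..ell i}"
  proof -
    have "(\<lambda>j. hook lam i j) ` {1..part lam i} \<subseteq> {1..ell i}" using hook_le_ell assms by force
    moreover have "ell i - ell k \<in> {1..ell i}" if "k \<in> {i+1..length lam}" for k
      using ell_strict[of i k] that assms by auto
    ultimately show ?thesis by blast
  qed
  have "card ((\<lambda>j. hook lam i j) ` {1..part lam i} \<union> (\<lambda>k. ell i - ell k) ` {i+1..length lam})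
      = part lam i + (length lam - i)"
    using card_Un_disjoint[OF _ _ dis] card_image[OF inj1] card_image[OF inj2] by simp
  also have "\<dots> = ell i" unfolding ell_def using assms by simp
  finally show "(\<lambda>j. hook lam i j) ` {1..part lam i} \<union> (\<lambda>k. ell i - ell k) ` {i+1..length lam} = {1..ell i}"
    using sub by (intro card_subset_eq) auto
qed

lemma row_count:
  assumes "1 \<le> i" "i \<le> length lam" "0 < d"
  shows "card {j\<in>{1..part lam i}. d dvd hook lam i j}
       + card {k\<in>{i+1..length lam}. ell i mod d = ell k mod d} = ell i div d"
proof -
  let ?S = "(\<lambda>j. hook lam i j) ` {1..part lam i}"
  let ?D = "(\<lambda>k. ell i - ell k) ` {i+1..length lam}"
  note rp = row_partition[OF assms(1,2)]
  have "{t\<in>{1..ell i}. d dvd t} = {t\<in>?S. d dvd t} \<union> {t\<in>?D. d dvd t}"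
    using rp(1) by blast
  then have "card {t\<in>{1..ell i}. d dvd t} = card {t\<in>?S. d dvd t} + card {t\<in>?D. d dvd t}"
    using rp(2) by (simp add: card_Un_disjoint disjoint_iff)
  moreover have "{t\<in>?S. d dvd t} = (\<lambda>j. hook lam i j) ` {j\<in>{1..part lam i}. d dvd hook lam i j}"
    by auto
  moreover have "{t\<in>?D. d dvd t} = (\<lambda>k. ell i - ell k) ` {k\<in>{i+1..length lam}. ell i mod d = ell k mod d}"
  proof -
    have "d dvd ell i - ell k \<longleftrightarrow> ell i mod d = ell k mod d" if "k \<in> {i+1..length lam}" for k
      using ell_strict[of i k] that assms mod_eq_dvd_iff_nat[of "ell k" "ell i" d] by auto
    then show ?thesis by auto
  qed
  moreover have "card ((\<lambda>j. hook lam i j) ` {j\<in>{1..part lam i}. d dvd hook lam i j})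
      = card {j\<in>{1..part lam i}. d dvd hook lam i j}"
    by (rule card_image, rule inj_on_subset[OF rp(3)]) auto
  moreover have "card ((\<lambda>k. ell i - ell k) ` {k\<in>{i+1..length lam}. ell i mod d = ell k mod d})
      = card {k\<in>{i+1..length lam}. ell i mod d = ell k mod d}"
    by (rule card_image, rule inj_on_subset[OF rp(4)]) auto
  ultimately show ?thesis using card_multiples[OF assms(3)] by simp
qed

lemma sum_ell: "(\<Sum>i\<in>{1..length lam}. ell i) = n + (\<Sum>k<length lam. k)"
proof -
  have "(\<Sum>i\<in>{1..length lam}. ell i) = (\<Sum>i\<in>{1..length lam}. part lam i) + (\<Sum>i\<in>{1..length lam}. length lam - i)"
    unfolding ell_def by (simp add: sum.distrib[symmetric])
  moreover have "(\<Sum>i\<in>{1..length lam}. part lam i) = n"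
  proof -
    have "(\<Sum>i\<in>{1..length lam}. part lam i) = (\<Sum>k<length lam. part lam (Suc k))"
      using sum.atLeast1_atMost_eq[of "part lam" "length lam"] by simp
    also have "\<dots> = (\<Sum>k<length lam. lam ! k)" by (intro sum.cong) (auto simp: part_def)
    also have "\<dots> = n" using P unfolding is_partition_def by (simp add: sum_list_sum_nth atLeast0LessThan)
    finally show ?thesis .
  qed
  moreover have "(\<Sum>i\<in>{1..length lam}. length lam - i) = (\<Sum>k<length lam. k)"
  proof -
    have "(\<Sum>i\<in>{1..length lam}. length lam - i) = (\<Sum>k<length lam. length lam - Suc k)"
      using sum.atLeast1_atMost_eq[of "\<lambda>i. length lam - i" "length lam"] by simp
    also have "\<dots> = (\<Sum>k<length lam. k)" by (rule sum.nat_diff_reindex)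
    finally show ?thesis .
  qed
  ultimately show ?thesis by simp
qed

definition cc :: "nat \<Rightarrow> nat \<Rightarrow> nat" where
  "cc d i = card {k\<in>{i+1..length lam}. ell i mod d = ell k mod d}"

lemma g_inj:
  assumes "0 < d"
  shows "inj_on (\<lambda>i. ell i mod d + d * cc d i) {1..length lam}"
proof -
  have lt: "ell i mod d + d * cc d i \<noteq> ell i' mod d + d * cc d i'"
    if "1 \<le> i" "i < i'" "i' \<le> length lam" for i i'
  proof
    assume h: "ell i mod d + d * cc d i = ell i' mod d + d * cc d i'"
    have "ell i mod d = (ell i mod d + d * cc d i) mod d" by simp
    also have "\<dots> = (ell i' mod d + d * cc d i') mod d" using h by simp
    also have "\<dots> = ell i' mod d" by simp
    finally have m: "ell i mod d = ell i' mod d" .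
    then have ceq: "cc d i = cc d i'" using h assms by simp
    have "insert i' {k\<in>{i'+1..length lam}. ell i' mod d = ell k mod d}
        \<subseteq> {k\<in>{i+1..length lam}. ell i mod d = ell k mod d}"
      using that m by auto
    then have "card (insert i' {k\<in>{i'+1..length lam}. ell i' mod d = ell k mod d})
        \<le> cc d i" unfolding cc_def by (intro card_mono) auto
    moreover have "card (insert i' {k\<in>{i'+1..length lam}. ell i' mod d = ell k mod d})
        = Suc (cc d i')" unfolding cc_def by (subst card_insert_disjoint) auto
    ultimately have "Suc (cc d i') \<le> cc d i" by simp
    then show False using ceq by simp
  qed
  show ?thesis
  proof (rule inj_onI)
    fix a b assume "a \<in> {1..length lam}" "b \<in> {1..length lam}"
      "ell a mod d + d * cc d a = ell b mod d + d * cc d b"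
    then show "a = b" by (cases a b rule: linorder_cases) (use lt[of a b] lt[of b a] in auto)
  qed
qed

lemma hook_count:
  assumes "0 < d"
  shows "d * card {(i,j)\<in>young_diagram lam. d dvd hook lam i j} \<le> n"
proof -
  let ?g = "\<lambda>i. ell i mod d + d * cc d i"
  let ?c = "\<lambda>i. card {j\<in>{1..part lam i}. d dvd hook lam i j}"
  have "{(i,j)\<in>young_diagram lam. d dvd hook lam i j}
      = Sigma {1..length lam} (\<lambda>i. {j\<in>{1..part lam i}. d dvd hook lam i j})"
    unfolding young_diagram_def by auto
  then have cnt: "card {(i,j)\<in>young_diagram lam. d dvd hook lam i j} = (\<Sum>i\<in>{1..length lam}. ?c i)"
    by simp
  have each: "d * ?c i + ?g i = ell i" if "i \<in> {1..length lam}" for i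
  proof -
    have "?c i + cc d i = ell i div d" using row_count[of i d] that assms unfolding cc_def by simp
    then have "d * ?c i + d * cc d i = d * (ell i div d)" by (simp add: add_mult_distrib2[symmetric])
    moreover have "d * (ell i div d) + ell i mod d = ell i" by (rule mult_div_mod_eq)
    ultimately show ?thesis by linarith
  qed
  have "d * card {(i,j)\<in>young_diagram lam. d dvd hook lam i j} + (\<Sum>i\<in>{1..length lam}. ?g i)
      = (\<Sum>i\<in>{1..length lam}. ell i)"
    unfolding cnt sum_distrib_left sum.distrib[symmetric] using each by (intro sum.cong) auto
  also have "\<dots> = n + (\<Sum>k<length lam. k)" by (rule sum_ell)
  finally have eq: "d * card {(i,j)\<in>young_diagram lam. d dvd hook lam i j} + (\<Sum>i\<in>{1..length lam}. ?g i)
      = n + (\<Sum>k<length lam. k)" .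
  have "(\<Sum>i\<in>{1..length lam}. ?g i) = \<Sum>(?g ` {1..length lam})"
    using sum.reindex[OF g_inj[OF assms], of "\<lambda>x. x"] by (simp add: comp_def)
  moreover have "card (?g ` {1..length lam}) = length lam"
    using card_image[OF g_inj[OF assms]] by simp
  ultimately have "(\<Sum>k<length lam. k) \<le> (\<Sum>i\<in>{1..length lam}. ?g i)"
    using distinct_sum[of "?g ` {1..length lam}"] by simp
  then show ?thesis using eq by linarith
qed

lemma sum_part_minus: "(\<Sum>r\<in>{1..length lam}. part lam r - 1) + length lam = n"
proof -
  have "(\<Sum>i\<in>{1..length lam}. part lam i) = (\<Sum>k<length lam. part lam (Suc k))"
    using sum.atLeast1_atMost_eq[of "part lam" "length lam"] by simp
  also have "\<dots> = (\<Sum>k<length lam. lam ! k)" by (intro sum.cong) (auto simp: part_def)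
  also have "\<dots> = n" using P unfolding is_partition_def by (simp add: sum_list_sum_nth atLeast0LessThan)
  finally have sp: "(\<Sum>i\<in>{1..length lam}. part lam i) = n" .
  have "(\<Sum>r\<in>{1..length lam}. part lam r - 1) + length lam = (\<Sum>r\<in>{1..length lam}. part lam r - 1) + (\<Sum>r\<in>{1..length lam}. (1::nat))"
    by simp
  also have "\<dots> = (\<Sum>r\<in>{1..length lam}. part lam r - 1 + 1)"
    by (rule sum.distrib[symmetric])
  also have "\<dots> = (\<Sum>r\<in>{1..length lam}. part lam r)"
  proof (intro sum.cong refl)
    fix x assume "x \<in> {1..length lam}"
    then have "1 \<le> part lam x" by (intro part_pos) auto
    then show "part lam x - 1 + 1 = part lam x" by simp
  qed
  finally show ?thesis using sp by simp
qed

lemma hook1_eq: "1 \<le> i \<Longrightarrow> i \<le> length lam \<Longrightarrow> hook lam i 1 = ell i"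
  using part_pos[of i] conj_one unfolding hook_def ell_def by simp

lemma ell_le_n: "1 \<le> i \<Longrightarrow> i \<le> length lam \<Longrightarrow> ell i \<le> n"
proof -
  assume i: "1 \<le> i" "i \<le> length lam"
  have "ell i \<le> ell 1" using ell_strict[of 1 i] i by (cases "i = 1") auto
  moreover have "part lam 1 - 1 \<le> (\<Sum>r\<in>{1..length lam}. part lam r - 1)"
    using i by (intro member_le_sum) auto
  ultimately show ?thesis using sum_part_minus part_pos[of 1] i unfolding ell_def by simp
qed

lemma hook_col2:
  assumes "1 \<le> i" "i \<le> length lam" "2 \<le> j" "j \<le> part lam i"
  shows "hook lam i j + length lam \<le> n"
proof -
  let ?c = "conj_part lam j"
  have ic: "i \<le> ?c" using conj_iff[of i j] assms by simp
  have cL: "?c \<le> length lam" by (rule conj_le)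
  have "(\<Sum>r\<in>{i..?c}. part lam r - 1) = (part lam i - 1) + (\<Sum>r\<in>{i+1..?c}. part lam r - 1)"
  proof -
    have "{i..?c} = insert i {i+1..?c}" using ic by auto
    then show ?thesis by simp
  qed
  moreover have "(\<Sum>r\<in>{i+1..?c}. (1::nat)) \<le> (\<Sum>r\<in>{i+1..?c}. part lam r - 1)"
  proof (rule sum_mono)
    fix r assume "r \<in> {i+1..?c}"
    then have "j \<le> part lam r" using conj_iff[of r j] assms by simp
    then show "1 \<le> part lam r - 1" using assms by simp
  qed
  moreover have "(\<Sum>r\<in>{i..?c}. part lam r - 1) \<le> (\<Sum>r\<in>{1..length lam}. part lam r - 1)"
    using assms cL by (intro sum_mono2) auto
  ultimately have "part lam i - 1 + (?c - i) \<le> (\<Sum>r\<in>{1..length lam}. part lam r - 1)" by simp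
  then show ?thesis using sum_part_minus assms ic unfolding hook_def by simp
qed

lemma yd_finite: "finite (young_diagram lam)"
proof -
  have "young_diagram lam \<subseteq> {1..length lam} \<times> {1..part lam 1}"
  proof
    fix x assume "x \<in> young_diagram lam"
    then obtain a b where h: "x = (a,b)" "1 \<le> a" "a \<le> length lam" "1 \<le> b" "b \<le> part lam a"
      unfolding young_diagram_def by blast
    then show "x \<in> {1..length lam} \<times> {1..part lam 1}" using part_mono[of 1 a] by auto
  qed
  then show ?thesis by (rule finite_subset) simp
qed

lemma hook_pos_le:
  assumes "(i,j) \<in> young_diagram lam"
  shows "0 < hook lam i j \<and> hook lam i j \<le> n"
proof -
  have a: "1 \<le> i" "i \<le> length lam" "1 \<le> j" "j \<le> part lam i" using assms unfolding young_diagram_def by auto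
  then show ?thesis using hook_le_ell[OF a] ell_le_n[of i] by auto
qed

lemma hook_pos_le': "x \<in> young_diagram lam \<Longrightarrow> 0 < (case x of (i,j) \<Rightarrow> hook lam i j) \<and> (case x of (i,j) \<Rightarrow> hook lam i j) \<le> n"
  by (cases x) (simp only: prod.case, rule hook_pos_le)

lemma H_dvd:
  "(\<Prod>(i,j)\<in>young_diagram lam. hook lam i j) dvd fact n"
proof (rule multiplicity_le_imp_dvd)
  show "(\<Prod>(i,j)\<in>young_diagram lam. hook lam i j) \<noteq> 0"
  proof
    assume "(\<Prod>(i,j)\<in>young_diagram lam. hook lam i j) = 0"
    then obtain x where "x \<in> young_diagram lam" "(case x of (i,j) \<Rightarrow> hook lam i j) = 0"
      using yd_finite by (auto simp only: prod_zero_iff)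
    then show False using hook_pos_le' by fastforce
  qed
next
  fix p :: nat assume p: "prime p"
  have "multiplicity p (\<Prod>(i,j)\<in>young_diagram lam. hook lam i j)
      = (\<Sum>e\<in>{1..n}. card {x\<in>young_diagram lam. p ^ e dvd (case x of (i,j) \<Rightarrow> hook lam i j)})"
    by (rule mult_prod_card[OF p yd_finite hook_pos_le'])
  also have "\<dots> \<le> (\<Sum>e\<in>{1..n}. card {x\<in>{1..n}. p ^ e dvd x})"
  proof (rule sum_mono)
    fix e
    have pe: "0 < p ^ e" using p by (simp add: prime_gt_0_nat)
    have "p ^ e * card {(i,j)\<in>young_diagram lam. p ^ e dvd hook lam i j} \<le> n"
      by (rule hook_count[OF pe])
    then have "card {(i,j)\<in>young_diagram lam. p ^ e dvd hook lam i j} \<le> n div p ^ e"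
      using pe by (simp add: less_eq_div_iff_mult_less_eq mult.commute)
    moreover have "{x\<in>young_diagram lam. p ^ e dvd (case x of (i,j) \<Rightarrow> hook lam i j)}
        = {(i,j)\<in>young_diagram lam. p ^ e dvd hook lam i j}" by auto
    ultimately show "card {x\<in>young_diagram lam. p ^ e dvd (case x of (i,j) \<Rightarrow> hook lam i j)}
        \<le> card {x\<in>{1..n}. p ^ e dvd x}"
      using card_multiples[OF pe, of n] by simp
  qed
  also have "\<dots> = multiplicity p (\<Prod>x\<in>{1..n}. x)"
    by (rule mult_prod_card[OF p, of "{1..n}" "\<lambda>x. x" n, symmetric]) auto
  also have "\<dots> = multiplicity p (fact n)" by (simp add: fact_prod)
  finally show "multiplicity p (\<Prod>(i,j)\<in>young_diagram lam. hook lam i j) \<le> multiplicity p (fact n)" .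
qed


lemma cnt_le:
  assumes "0 < d"
  shows "card {x\<in>young_diagram lam. d dvd (case x of (i,j) \<Rightarrow> hook lam i j)} \<le> card {x\<in>{1..n}. d dvd x}"
proof -
  have "d * card {(i,j)\<in>young_diagram lam. d dvd hook lam i j} \<le> n"
    by (rule hook_count[OF assms])
  then have "card {(i,j)\<in>young_diagram lam. d dvd hook lam i j} \<le> n div d"
    using assms by (simp add: less_eq_div_iff_mult_less_eq mult.commute)
  moreover have "{x\<in>young_diagram lam. d dvd (case x of (i,j) \<Rightarrow> hook lam i j)}
      = {(i,j)\<in>young_diagram lam. d dvd hook lam i j}" by auto
  ultimately show ?thesis using card_multiples[OF assms, of n] by simp
qed

lemma col1_only:
  assumes s: "n - mult_one lam \<le> q" and xA: "x \<in> young_diagram lam" and dv: "q dvd (case x of (i,j) \<Rightarrow> hook lam i j)"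
  shows "snd x = 1"
proof -
  obtain i j where xe: "x = (i,j)" by (cases x)
  have x: "1 \<le> i" "i \<le> length lam" "1 \<le> j" "j \<le> part lam i"
    using xA unfolding xe young_diagram_def by auto
  have dv': "q dvd hook lam i j" using dv xe by simp
  show ?thesis
  proof (rule ccontr)
    assume "snd x \<noteq> 1"
    then have j2: "2 \<le> j" using x xe by simp
    have hc: "hook lam i j + length lam \<le> n" using hook_col2[OF x(1,2) j2 x(4)] .
    have "lam ! (i - 1) \<in> set lam" using x by (intro nth_mem) simp
    moreover have "lam ! (i - 1) \<noteq> 1" using x j2 unfolding part_def by simp
    ultimately have "mult_one lam < length lam" unfolding mult_one_def by (rule count_list_less)
    then have "hook lam i j < q" using hc s by linarith
    moreover have "0 < hook lam i j" using hook_le_ell[OF x] by simp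
    ultimately show False using dv' by (simp add: nat_dvd_not_less)
  qed
qed


lemma strict_count:
  assumes q: "prime q" and s: "n - mult_one lam \<le> q" and k: "1 \<le> k" "k * q \<le> n"
    and nf: "k * q \<notin> fch lam"
  shows "card {x\<in>young_diagram lam. q dvd (case x of (i,j) \<Rightarrow> hook lam i j)} < card {x\<in>{1..n}. q dvd x}"
proof -
  let ?A = "{x\<in>young_diagram lam. q dvd (case x of (i,j) \<Rightarrow> hook lam i j)}"
  let ?B = "{i\<in>{1..length lam}. q dvd hook lam i 1}"
  let ?M = "{x\<in>{1..n}. q dvd x}"
  have q0: "0 < q" using q by (simp add: prime_gt_0_nat)
  have sub: "?A \<subseteq> (\<lambda>i. (i, 1::nat)) ` ?B"
  proof
    fix x assume xA: "x \<in> ?A"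
    then have x1: "snd x = 1" using col1_only[OF s] by blast
    obtain i j where xe: "x = (i,j)" by (cases x)
    have "1 \<le> i" "i \<le> length lam" "q dvd hook lam i 1" "j = 1"
      using xA x1 unfolding xe young_diagram_def by auto
    then show "x \<in> (\<lambda>i. (i, 1)) ` ?B" unfolding xe by auto
  qed
  have "card ?A \<le> card ((\<lambda>i. (i, 1::nat)) ` ?B)" by (rule card_mono[OF _ sub]) simp
  also have "\<dots> \<le> card ?B" by (rule card_image_le) simp
  also have "card ?B = card ((\<lambda>i. hook lam i 1) ` ?B)"
  proof (rule card_image[symmetric], rule inj_onI)
    fix a b assume ab: "a \<in> ?B" "b \<in> ?B" "hook lam a 1 = hook lam b 1"
    have a1: "1 \<le> a" "a \<le> length lam" and b1: "1 \<le> b" "b \<le> length lam" using ab(1,2) by auto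
    have "ell a = ell b" using ab(3) hook1_eq[OF a1] hook1_eq[OF b1] by simp
    then show "a = b"
    proof (cases a b rule: linorder_cases)
      case less then show ?thesis using ell_strict[OF a1(1) less b1(2)] \<open>ell a = ell b\<close> by simp
    next
      case greater then show ?thesis using ell_strict[OF b1(1) greater a1(2)] \<open>ell a = ell b\<close> by simp
    qed
  qed
  also have "\<dots> \<le> card (?M - {k * q})"
  proof (rule card_mono)
    show "(\<lambda>i. hook lam i 1) ` ?B \<subseteq> ?M - {k * q}"
    proof
      fix t assume "t \<in> (\<lambda>i. hook lam i 1) ` ?B"
      then obtain i where i: "i \<in> ?B" "t = hook lam i 1" by blast
      then have i1: "1 \<le> i" "i \<le> length lam" and dq: "q dvd t" by auto
      have "t = ell i" using i(2) hook1_eq[OF i1] by simp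
      then have "1 \<le> t" "t \<le> n" using ell_le_n[OF i1] ell_pos[OF i1] by auto
      moreover have "t \<in> fch lam" unfolding fch_def num_parts_def using i1 i(2) by blast
      ultimately show "t \<in> ?M - {k * q}" using dq nf by auto
    qed
  qed simp
  also have "\<dots> < card ?M"
  proof -
    have "1 * 1 \<le> k * q" using k(1) q0 by (intro mult_le_mono) auto
    moreover have "q dvd k * q" by (rule dvd_triv_right)
    ultimately have mem: "k * q \<in> ?M" using k(2) by simp
    have fin: "finite ?M" by simp
    have "card (?M - {k * q}) = card ?M - 1" using mem by (rule card_Diff_singleton)
    moreover have "0 < card ?M" using fin mem card_gt_0_iff by blast
    ultimately show ?thesis by linarith
  qed
  finally show ?thesis .
qed

lemma main:
  assumes q: "prime q" and s: "n - mult_one lam \<le> q" and qn: "q \<le> n"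
    and nd: "\<not> q dvd f_lam lam" and k: "1 \<le> k" "k \<le> n div q"
  shows "k * q \<in> fch lam"
proof (rule ccontr)
  assume nf: "k * q \<notin> fch lam"
  define H where "H = (\<Prod>(i,j)\<in>young_diagram lam. hook lam i j)"
  have q0: "0 < q" using q by (simp add: prime_gt_0_nat)
  have kq: "k * q \<le> n" using k q0 by (simp add: less_eq_div_iff_mult_less_eq)
  have sl: "sum_list lam = n" using P unfolding is_partition_def by simp
  have f: "f_lam lam = fact n div H" unfolding f_lam_def H_def sl ..
  have Hd: "H dvd fact n" unfolding H_def by (rule H_dvd)
  have fe: "fact n = f_lam lam * H" using f Hd by simp
  have fn0: "(fact n :: nat) \<noteq> 0" by simp
  have H0: "H \<noteq> 0" using fe fn0 by (cases "H = 0") simp_all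
  have f0: "f_lam lam \<noteq> 0" using fe fn0 by (cases "f_lam lam = 0") simp_all
  have "multiplicity q (fact n :: nat) = multiplicity q (f_lam lam) + multiplicity q H"
    unfolding fe using q H0 f0 by (intro prime_elem_multiplicity_mult_distrib) auto
  also have "multiplicity q (f_lam lam) = 0" using nd by (rule not_dvd_imp_multiplicity_0)
  finally have eq: "multiplicity q (fact n :: nat) = multiplicity q H" by simp
  have "multiplicity q H = (\<Sum>e\<in>{1..n}. card {x\<in>young_diagram lam. q ^ e dvd (case x of (i,j) \<Rightarrow> hook lam i j)})"
    unfolding H_def by (rule mult_prod_card[OF q yd_finite hook_pos_le'])
  also have "\<dots> < (\<Sum>e\<in>{1..n}. card {x\<in>{1..n}. q ^ e dvd x})"
  proof (rule sum_strict_mono_ex1)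
    show "\<forall>e\<in>{1..n}. card {x\<in>young_diagram lam. q ^ e dvd (case x of (i,j) \<Rightarrow> hook lam i j)}
        \<le> card {x\<in>{1..n}. q ^ e dvd x}"
      using q0 by (intro ballI cnt_le) simp
    show "\<exists>e\<in>{1..n}. card {x\<in>young_diagram lam. q ^ e dvd (case x of (i,j) \<Rightarrow> hook lam i j)}
        < card {x\<in>{1..n}. q ^ e dvd x}"
    proof (rule bexI[of _ 1])
      show "1 \<in> {1..n}" using qn q0 by simp
      show "card {x\<in>young_diagram lam. q ^ 1 dvd (case x of (i,j) \<Rightarrow> hook lam i j)}
        < card {x\<in>{1..n}. q ^ 1 dvd x}" using strict_count[OF q s k(1) kq nf] by simp
    qed
  qed simp
  also have "\<dots> = multiplicity q (\<Prod>x\<in>{1..n}. x)"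
    by (rule mult_prod_card[OF q, of "{1..n}" "\<lambda>x. x" n, symmetric]) auto
  also have "\<dots> = multiplicity q (fact n :: nat)" by (simp add: fact_prod)
  finally show False using eq by simp
qed

end

theorem proposition7p3:
  fixes lam :: "nat list" and n q :: nat
  assumes "is_partition lam n"
    and "prime q"
    and "n - mult_one lam \<le> q" and "q \<le> n"
    and "\<not> q dvd f_lam lam"
  shows "\<forall>k. 1 \<le> k \<and> k \<le> n div q \<longrightarrow> k * q \<in> fch lam"
  using main[OF assms] by blast

end
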